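(* Let $d\in\{2,3\}$, $r>\frac{d+1}{2}$, $\beta>0$, and let $\mathbf u\in H_{\mathbb C}$ with $\|A^{1/4}\mathbf u\|_\beta<\infty$. Then $$|\langle B(\mathbf u,\mathbf u),A^{r}e^{2\beta A^{1/2}}\mathbf u\rangle|\le C\,2^r C_W(r)\,\|\mathbf u\|_\beta\,\|A^{1/4}\mathbf u\|_\beta^2,$$ where $C>0$ depends only on $d$.
   Context: Periodic domain $\Omega=[0,2\pi]^d$, $H$ = real mean-zero divergence-free $L^2$ vector fields, $H_{\mathbb C}=H+iH$ with sesquilinear $L^2$ inner product $\langle\cdot,\cdot\rangle$. $A=-\Delta$, acting by multiplication by $|\mathbf k|^2$ on Fourier coefficients; $A^s$ and $e^{\beta A^{1/2}}$ act by $|\mathbf k|^{2s}$ and $e^{\beta|\mathbf k|}$. $\|\mathbf f\|_\beta=\|A^{r/2}e^{\beta A^{1/2}}\mathbf f\|$. $B(\mathbf u,\mathbf v)=\mathbb P(\mathbf u\cdot\nabla\mathbf v)$ with $\mathbb P$ the Leray–Helmholtz projection, extended complex-bilinearly. $C_W(r)=\frac{1}{\pi 2^{d-1}}\frac{2r-d}{2r-1-d}$. *)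

theory Defs
  imports "HOL-Analysis.Analysis"
begin

text \<open>Fourier-side model on the torus [0,2pi]^d, d = CARD('n).
  A vector field f is represented by its Fourier coefficients
  f :: int^'n => complex^'n, with f(x) = sum_k f k * e^{i k.x}.\<close>

definition wnorm :: "int^'n::finite \<Rightarrow> real" where
  "wnorm k = sqrt (\<Sum>i\<in>UNIV. (real_of_int (k$i))^2)"

definition kvec :: "int^'n::finite \<Rightarrow> complex^'n" where
  "kvec k = (\<chi> i. complex_of_int (k$i))"

definition kdot :: "int^'n::finite \<Rightarrow> complex^'n \<Rightarrow> complex" where
  "kdot k w = (\<Sum>i\<in>UNIV. complex_of_int (k$i) * w$i)"

definition cdot :: "complex^'n::finite \<Rightarrow> complex^'n \<Rightarrow> complex" where
  "cdot v w = (\<Sum>i\<in>UNIV. v$i * cnj (w$i))"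

text \<open>H_C: mean-zero, divergence-free, square-integrable (complex) fields\<close>
definition in_HC :: "(int^'n::finite \<Rightarrow> complex^'n) \<Rightarrow> bool" where
  "in_HC u \<longleftrightarrow> u 0 = 0 \<and> (\<forall>k. kdot k (u k) = 0) \<and>
     (\<lambda>k. (norm (u k))^2) summable_on UNIV"

text \<open>L^2 inner product via Parseval\<close>
definition L2inner :: "(int^'n::finite \<Rightarrow> complex^'n) \<Rightarrow> (int^'n \<Rightarrow> complex^'n) \<Rightarrow> complex" where
  "L2inner f g = complex_of_real ((2*pi)^CARD('n)) * (\<Sum>\<^sub>\<infinity>k. cdot (f k) (g k))"

definition Apow :: "real \<Rightarrow> (int^'n::finite \<Rightarrow> complex^'n) \<Rightarrow> (int^'n \<Rightarrow> complex^'n)" where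
  "Apow e f = (\<lambda>k. complex_of_real (wnorm k powr (2*e)) *s f k)"

definition expA :: "real \<Rightarrow> (int^'n::finite \<Rightarrow> complex^'n) \<Rightarrow> (int^'n \<Rightarrow> complex^'n)" where
  "expA \<beta> f = (\<lambda>k. complex_of_real (exp (\<beta> * wnorm k)) *s f k)"

definition L2norm :: "(int^'n::finite \<Rightarrow> complex^'n) \<Rightarrow> real" where
  "L2norm f = sqrt ((2*pi)^CARD('n) * (\<Sum>\<^sub>\<infinity>k. (norm (f k))^2))"

definition gnorm :: "real \<Rightarrow> real \<Rightarrow> (int^'n::finite \<Rightarrow> complex^'n) \<Rightarrow> real" where
  "gnorm r \<beta> f = L2norm (Apow (r/2) (expA \<beta> f))"

definition gfinite :: "real \<Rightarrow> real \<Rightarrow> (int^'n::finite \<Rightarrow> complex^'n) \<Rightarrow> bool" where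
  "gfinite r \<beta> f \<longleftrightarrow> (\<lambda>k. (norm (Apow (r/2) (expA \<beta> f) k))^2) summable_on UNIV"

text \<open>Fourier coefficients of u . grad v: sum over j + l = k of (u(j) . i l) v(l)\<close>
definition advect :: "(int^'n::finite \<Rightarrow> complex^'n) \<Rightarrow> (int^'n \<Rightarrow> complex^'n) \<Rightarrow> (int^'n \<Rightarrow> complex^'n)" where
  "advect u v = (\<lambda>k. \<Sum>\<^sub>\<infinity>j. (\<i> * kdot (k - j) (u j)) *s v (k - j))"

definition leray :: "(int^'n::finite \<Rightarrow> complex^'n) \<Rightarrow> (int^'n \<Rightarrow> complex^'n)" where
  "leray f = (\<lambda>k. if k = 0 then 0
      else f k - (kdot k (f k) / complex_of_real ((wnorm k)^2)) *s kvec k)"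

definition Bop :: "(int^'n::finite \<Rightarrow> complex^'n) \<Rightarrow> (int^'n \<Rightarrow> complex^'n) \<Rightarrow> (int^'n \<Rightarrow> complex^'n)" where
  "Bop u v = leray (advect u v)"

definition CW :: "nat \<Rightarrow> real \<Rightarrow> real" where
  "CW d r = 1 / (pi * 2^(d-1)) * ((2*r - real d) / (2*r - 1 - real d))"

end

theory Submission
  imports Defs "HOL-Library.FuncSet"
begin

definition rvec :: "int^'n::finite \<Rightarrow> real^'n" where
  "rvec k = (\<chi> i. real_of_int (k$i))"

lemma wnorm_rvec: "wnorm k = norm (rvec k)"
  unfolding wnorm_def norm_vec_def L2_set_def rvec_def by simp

lemma rvec_add: "rvec (a + b) = rvec a + rvec b"
  unfolding rvec_def by (simp add: vec_eq_iff)

lemma rvec_diff: "rvec (a - b) = rvec a - rvec b"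
  unfolding rvec_def by (simp add: vec_eq_iff)

lemma wnorm_nonneg: "0 \<le> wnorm k"
  by (simp add: wnorm_rvec)

lemma wnorm_zero[simp]: "wnorm 0 = 0"
  unfolding wnorm_def by simp

lemma wnorm_triangle: "wnorm (a + b) \<le> wnorm a + wnorm b"
  unfolding wnorm_rvec rvec_add by (rule norm_triangle_ineq)

lemma wnorm_minus: "wnorm (- a) = wnorm a"
  unfolding wnorm_def by simp

lemma wnorm_coord: "\<bar>real_of_int (k$i)\<bar> \<le> wnorm k"
proof -
  have "\<bar>rvec k $ i\<bar> \<le> norm (rvec k)" by (rule component_le_norm_cart)
  thus ?thesis by (simp add: rvec_def wnorm_rvec)
qed

lemma wnorm_ge1: assumes "k \<noteq> 0" shows "1 \<le> wnorm k"
proof -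
  obtain i where "k$i \<noteq> 0" using assms by (metis vec_eq_iff zero_index)
  hence "1 \<le> \<bar>real_of_int (k$i)\<bar>" by linarith
  thus ?thesis using wnorm_coord[of k i] by linarith
qed

lemma wnorm_pos_iff: "wnorm k = 0 \<longleftrightarrow> k = 0"
  using wnorm_ge1[of k] by (cases "k = 0") auto

lemma norm_cvec: "norm (v :: complex^'n::finite) = sqrt (\<Sum>i\<in>UNIV. (cmod (v$i))^2)"
  unfolding norm_vec_def L2_set_def by simp

lemma norm_kvec: "norm (kvec k) = wnorm k"
  unfolding norm_cvec wnorm_def kvec_def by simp

lemma norm_smult_c: "norm (c *s (v :: complex^'n::finite)) = cmod c * norm v"
proof -
  have "(\<Sum>i\<in>UNIV. (cmod ((c *s v)$i))^2) = (cmod c)^2 * (\<Sum>i\<in>UNIV. (cmod (v$i))^2)"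
    by (simp add: norm_mult power_mult_distrib sum_distrib_left)
  thus ?thesis unfolding norm_cvec by (simp add: real_sqrt_mult)
qed

lemma kdot_bound: "cmod (kdot k w) \<le> wnorm k * norm w"
proof -
  have "cmod (kdot k w) \<le> (\<Sum>i\<in>UNIV. cmod (complex_of_int (k$i) * w$i))"
    unfolding kdot_def by (rule norm_sum)
  also have "\<dots> = (\<Sum>i\<in>UNIV. \<bar>real_of_int (k$i)\<bar> * \<bar>cmod (w$i)\<bar>)"
    by (simp add: norm_mult)
  also have "\<dots> \<le> L2_set (\<lambda>i. real_of_int (k$i)) UNIV * L2_set (\<lambda>i. cmod (w$i)) UNIV"
    by (rule L2_set_mult_ineq)
  also have "\<dots> = wnorm k * norm w"
    unfolding wnorm_def norm_vec_def L2_set_def by simp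
  finally show ?thesis .
qed

lemma cdot_bound: "cmod (cdot v w) \<le> norm v * norm w"
proof -
  have "cmod (cdot v w) \<le> (\<Sum>i\<in>UNIV. cmod (v$i * cnj (w$i)))"
    unfolding cdot_def by (rule norm_sum)
  also have "\<dots> = (\<Sum>i\<in>UNIV. \<bar>cmod (v$i)\<bar> * \<bar>cmod (w$i)\<bar>)"
    by (simp add: norm_mult)
  also have "\<dots> \<le> L2_set (\<lambda>i. cmod (v$i)) UNIV * L2_set (\<lambda>i. cmod (w$i)) UNIV"
    by (rule L2_set_mult_ineq)
  also have "\<dots> = norm v * norm w"
    unfolding norm_vec_def L2_set_def by simp
  finally show ?thesis .
qed

lemma leray_bound: "norm (leray f k) \<le> 2 * norm (f k)"
proof (cases "k = 0")
  case True thus ?thesis by (simp add: leray_def)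
next
  case False
  hence w1: "1 \<le> wnorm k" by (rule wnorm_ge1)
  have "norm (leray f k) \<le> norm (f k) + norm ((kdot k (f k) / complex_of_real ((wnorm k)^2)) *s kvec k)"
    unfolding leray_def using False by (simp add: norm_triangle_ineq4)
  also have "norm ((kdot k (f k) / complex_of_real ((wnorm k)^2)) *s kvec k)
      = cmod (kdot k (f k)) / (wnorm k)^2 * wnorm k"
    by (simp add: norm_smult_c norm_kvec norm_divide norm_power)
  also have "\<dots> \<le> wnorm k * norm (f k) / (wnorm k)^2 * wnorm k"
    by (intro mult_right_mono divide_right_mono kdot_bound) (auto simp: wnorm_nonneg)
  also have "\<dots> = norm (f k)" using w1 by (simp add: power2_eq_square)
  finally show ?thesis by simp
qed

lemma zeta_step:
  fixes a :: real and n :: nat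
  assumes a: "a > 1" and n: "n \<ge> 1"
  shows "real (Suc n) powr (-a) \<le> (real n powr (1-a) - real (Suc n) powr (1-a)) / (a-1)"
proof -
  have der: "\<And>x. real n \<le> x \<Longrightarrow> x \<le> real (Suc n) \<Longrightarrow> DERIV (\<lambda>z. z powr (1-a)) x :> (1-a) * x powr (1-a-1)"
    using n by (intro has_real_derivative_powr) auto
  have "\<exists>z. real n < z \<and> z < real (Suc n) \<and>
     real (Suc n) powr (1-a) - real n powr (1-a) = (real (Suc n) - real n) * ((1-a) * z powr (1-a-1))"
    by (rule MVT2[OF _ der]) auto
  then obtain z where z: "real n < z" "z < real (Suc n)"
    "real (Suc n) powr (1-a) - real n powr (1-a) = (1-a) * z powr (-a)" by auto
  have "real (Suc n) powr (-a) \<le> z powr (-a)"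
    using z n a by (intro powr_mono2') auto
  hence "(a-1) * real (Suc n) powr (-a) \<le> (a-1) * z powr (-a)"
    using a by (intro mult_left_mono) auto
  also have "\<dots> = real n powr (1-a) - real (Suc n) powr (1-a)"
    using z(3) by (simp add: algebra_simps)
  finally have "(a-1) * real (Suc n) powr (-a) \<le> real n powr (1-a) - real (Suc n) powr (1-a)" .
  thus ?thesis using a by (simp add: field_simps)
qed

lemma zeta_partial:
  fixes a :: real
  assumes a: "a > 1" and M: "M \<ge> 1"
  shows "(\<Sum>n=1..M. real n powr (-a)) \<le> 1 + (1 - real M powr (1-a)) / (a-1)"
  using M
proof (induction M)
  case 0 thus ?case by simp
next
  case (Suc M)
  show ?case
  proof (cases "M = 0")
    case True thus ?thesis by simp
  next
    case False
    hence IH: "(\<Sum>n=1..M. real n powr (-a)) \<le> 1 + (1 - real M powr (1-a)) / (a-1)"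
      using Suc by simp
    have "(\<Sum>n=1..Suc M. real n powr (-a)) = (\<Sum>n=1..M. real n powr (-a)) + real (Suc M) powr (-a)"
      by simp
    also have "\<dots> \<le> 1 + (1 - real M powr (1-a)) / (a-1)
        + (real M powr (1-a) - real (Suc M) powr (1-a)) / (a-1)"
      using IH zeta_step[OF a, of M] False by linarith
    also have "\<dots> = 1 + (1 - real (Suc M) powr (1-a)) / (a-1)"
      by (simp add: add_divide_distrib[symmetric])
    finally show ?thesis .
  qed
qed

lemma zeta_finite:
  fixes a :: real
  assumes a: "a > 1" and N: "finite N" "0 \<notin> N"
  shows "(\<Sum>n\<in>N. real n powr (-a)) \<le> 1 + 1 / (a-1)"
proof (cases "N = {}")
  case True thus ?thesis using a by simp
next
  case False
  define M where "M = Max N"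
  have M1: "M \<ge> 1" using Max_in[OF N(1) False] N(2) unfolding M_def
    by (cases "Max N") auto
  have sub: "N \<subseteq> {1..M}"
  proof
    fix x assume x: "x \<in> N"
    have "x \<noteq> 0" using x N(2) by metis
    moreover have "x \<le> Max N" using x N(1) by simp
    ultimately
    show "x \<in> {1..M}" by (simp add: M_def)
  qed
  have "(\<Sum>n\<in>N. real n powr (-a)) \<le> (\<Sum>n=1..M. real n powr (-a))"
    by (rule sum_mono2[OF _ sub]) auto
  also have "\<dots> \<le> 1 + (1 - real M powr (1-a)) / (a-1)" by (rule zeta_partial[OF a M1])
  also have "\<dots> \<le> 1 + 1 / (a-1)" using a by (simp add: divide_right_mono)
  finally show ?thesis .
qed

lemma zeta_int:
  fixes a :: real
  assumes a: "a > 1" and T: "finite T" "0 \<notin> T"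
  shows "(\<Sum>t\<in>T. \<bar>real_of_int t\<bar> powr (-a)) \<le> 2 * (1 + 1 / (a-1))"
proof -
  define Tp where "Tp = {t\<in>T. t > 0}"
  define Tm where "Tm = {t\<in>T. t < 0}"
  have TT: "T = Tp \<union> Tm" "Tp \<inter> Tm = {}" using T unfolding Tp_def Tm_def
    by (auto, metis linorder_neqE_linordered_idom)
  have fin: "finite Tp" "finite Tm" using T unfolding Tp_def Tm_def by auto
  have "(\<Sum>t\<in>Tp. \<bar>real_of_int t\<bar> powr (-a)) = (\<Sum>n\<in>nat ` Tp. real n powr (-a))"
    by (subst sum.reindex) (auto simp: inj_on_def Tp_def intro!: sum.cong)
  also have "\<dots> \<le> 1 + 1/(a-1)" using fin a by (intro zeta_finite) (auto simp: Tp_def)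
  finally have 1: "(\<Sum>t\<in>Tp. \<bar>real_of_int t\<bar> powr (-a)) \<le> 1 + 1/(a-1)" .
  have "(\<Sum>t\<in>Tm. \<bar>real_of_int t\<bar> powr (-a)) = (\<Sum>n\<in>(\<lambda>t. nat (-t)) ` Tm. real n powr (-a))"
    by (subst sum.reindex) (auto simp: inj_on_def Tm_def intro!: sum.cong)
  also have "\<dots> \<le> 1 + 1/(a-1)" using fin a by (intro zeta_finite) (auto simp: Tm_def)
  finally have 2: "(\<Sum>t\<in>Tm. \<bar>real_of_int t\<bar> powr (-a)) \<le> 1 + 1/(a-1)" .
  show ?thesis using 1 2 by (simp add: TT sum.union_disjoint fin)
qed

lemma box_card:
  fixes i :: "'n::finite" and t :: int and T :: int
  assumes "T \<ge> 0" and S: "S \<subseteq> {l::int^'n. l$i = t \<and> (\<forall>j. \<bar>l$j\<bar> \<le> T)}"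
  shows "card S \<le> nat (2*T+1) ^ (CARD('n) - 1)"
proof -
  define B where "B = PiE (UNIV - {i}) (\<lambda>_. {-T..T})"
  define \<phi> where "\<phi> = (\<lambda>l::int^'n. restrict (\<lambda>j. l$j) (UNIV - {i}))"
  have inj: "inj_on \<phi> {l::int^'n. l$i = t \<and> (\<forall>j. \<bar>l$j\<bar> \<le> T)}"
  proof (rule inj_onI)
    fix x y assume x: "x \<in> {l::int^'n. l$i = t \<and> (\<forall>j. \<bar>l$j\<bar> \<le> T)}"
      and y: "y \<in> {l::int^'n. l$i = t \<and> (\<forall>j. \<bar>l$j\<bar> \<le> T)}" and e: "\<phi> x = \<phi> y"
    show "x = y" unfolding vec_eq_iff
    proof
      fix j show "x$j = y$j"
      proof (cases "j = i")
        case True thus ?thesis using x y by simp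
      next
        case False
        hence "\<phi> x j = \<phi> y j" using e by simp
        thus ?thesis using False unfolding \<phi>_def by simp
      qed
    qed
  qed
  have img: "\<phi> ` {l::int^'n. l$i = t \<and> (\<forall>j. \<bar>l$j\<bar> \<le> T)} \<subseteq> B"
    unfolding B_def \<phi>_def apply (auto simp: PiE_def extensional_def abs_le_iff split: if_splits)
    by (meson minus_le_iff)
  have finB: "finite B" unfolding B_def by (intro finite_PiE) auto
  have "card S \<le> card B"
    by (rule card_inj_on_le[OF inj_on_subset[OF inj S] _ finB]) (use img S in blast)
  also have "card B = nat (2*T+1) ^ (CARD('n) - 1)"
    unfolding B_def using assms
    by (simp add: card_PiE card_Diff_singleton)
  finally show ?thesis .
qed

lemma max_coord:
  fixes l :: "int^'n::finite"
  obtains i where "\<forall>j. \<bar>l$j\<bar> \<le> \<bar>l$i\<bar>"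
proof -
  have "Max ((\<lambda>j. \<bar>l$j\<bar>) ` UNIV) \<in> (\<lambda>j. \<bar>l$j\<bar>) ` UNIV" by (rule Max_in) auto
  then obtain i where i: "Max ((\<lambda>j. \<bar>l$j\<bar>) ` UNIV) = \<bar>l$i\<bar>" by blast
  have "\<forall>j. \<bar>l$j\<bar> \<le> \<bar>l$i\<bar>" unfolding i[symmetric] by (auto intro: Max_ge)
  thus ?thesis using that by blast
qed

lemma lattice_sum:
  fixes G :: "(int^'n::finite) set"
  assumes s: "s > real CARD('n)" and G: "finite G" "0 \<notin> G"
  shows "(\<Sum>l\<in>G. wnorm l powr (-s))
     \<le> real (2 * CARD('n) * 3^(CARD('n)-1)) * (1 + 1/(s - real CARD('n)))"
proof -
  define d where "d = CARD('n)"
  have d1: "d \<ge> 1" unfolding d_def by (simp add: Suc_leI)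
  define cond where "cond = (\<lambda>i (l::int^'n). l$i \<noteq> 0 \<and> (\<forall>j. \<bar>l$j\<bar> \<le> \<bar>l$i\<bar>))"
  define g where "g = (\<lambda>t::int. \<bar>real_of_int t\<bar> powr (-s))"
  have step1: "wnorm l powr (-s) \<le> (\<Sum>i\<in>UNIV. if cond i l then g (l$i) else 0)" if l: "l \<in> G" for l
  proof -
    obtain i where i: "\<forall>j. \<bar>l$j\<bar> \<le> \<bar>l$i\<bar>" by (rule max_coord)
    have l0: "l \<noteq> 0" using l G by auto
    have "l$i \<noteq> 0"
    proof
      assume "l$i = 0"
      hence "\<forall>j. l$j = 0" using i by (metis abs_0 abs_le_zero_iff)
      thus False using l0 by (simp add: vec_eq_iff)
    qed
    hence ci: "cond i l" using i unfolding cond_def by auto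
    have pos: "0 < \<bar>real_of_int (l$i)\<bar>" using \<open>l$i \<noteq> 0\<close> by simp
    have "wnorm l powr (-s) \<le> g (l$i)" unfolding g_def
      using s pos wnorm_coord[of l i] by (intro powr_mono2') auto
    also have "\<dots> = (if cond i l then g (l$i) else 0)" using ci by simp
    also have "\<dots> \<le> (\<Sum>i\<in>UNIV. if cond i l then g (l$i) else 0)"
      by (rule member_le_sum) (auto simp: g_def)
    finally show ?thesis .
  qed
  have "(\<Sum>l\<in>G. wnorm l powr (-s)) \<le> (\<Sum>l\<in>G. \<Sum>i\<in>UNIV. if cond i l then g (l$i) else 0)"
    by (rule sum_mono) (rule step1)
  also have "\<dots> = (\<Sum>i\<in>UNIV. \<Sum>l\<in>G. if cond i l then g (l$i) else 0)"
    by (rule sum.swap)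
  also have "\<dots> \<le> (\<Sum>i\<in>(UNIV::'n set). 3^(d-1) * (2 * (1 + 1/(s - real d))))"
  proof (rule sum_mono)
    fix i :: 'n
    define Gi where "Gi = {l\<in>G. cond i l}"
    define T where "T = (\<lambda>l. l$i) ` Gi"
    have finGi: "finite Gi" using G unfolding Gi_def by auto
    have finT: "finite T" unfolding T_def using finGi by auto
    have T0: "0 \<notin> T" unfolding T_def Gi_def cond_def by auto
    have "(\<Sum>l\<in>G. if cond i l then g (l$i) else 0) = (\<Sum>l\<in>Gi. g (l$i))"
      unfolding Gi_def using G by (simp add: sum.inter_filter)
    also have "\<dots> = (\<Sum>t\<in>T. \<Sum>l\<in>{l\<in>Gi. l$i = t}. g (l$i))"
      unfolding T_def by (rule sum.image_gen[OF finGi])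
    also have "\<dots> = (\<Sum>t\<in>T. real (card {l\<in>Gi. l$i = t}) * g t)"
      by (intro sum.cong refl) auto
    also have "\<dots> \<le> (\<Sum>t\<in>T. 3^(d-1) * \<bar>real_of_int t\<bar> powr (-(s - real d + 1)))"
    proof (rule sum_mono)
      fix t assume t: "t \<in> T"
      have tpos: "0 < \<bar>real_of_int t\<bar>" using t T0 by (cases "t = 0") auto
      have h: "card {l\<in>Gi. l$i = t} \<le> nat (2*\<bar>t\<bar>+1) ^ (CARD('n) - 1)"
        by (rule box_card[where T="\<bar>t\<bar>" and i=i and t=t]) (auto simp: Gi_def cond_def)
      have "real (card {l\<in>Gi. l$i = t}) \<le> real (nat (2*\<bar>t\<bar>+1) ^ (CARD('n) - 1))"
        using h by linarith
      also have "real (nat (2*\<bar>t\<bar>+1) ^ (CARD('n) - 1)) = (2*\<bar>real_of_int t\<bar>+1) ^ (d - 1)"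
        by (simp add: of_nat_power d_def)
      also have "\<dots> \<le> (3*\<bar>real_of_int t\<bar>) ^ (d - 1)"
        using tpos by (intro power_mono) (auto simp: of_int_abs[symmetric] simp del: of_int_abs)
      also have "\<dots> = 3^(d-1) * \<bar>real_of_int t\<bar> powr (real d - 1)"
        using tpos d1 by (simp add: power_mult_distrib powr_realpow[symmetric] of_nat_diff)
      finally have c: "real (card {l\<in>Gi. l$i = t}) \<le> 3^(d-1) * \<bar>real_of_int t\<bar> powr (real d - 1)" .
      have "real (card {l\<in>Gi. l$i = t}) * g t \<le> 3^(d-1) * \<bar>real_of_int t\<bar> powr (real d - 1) * g t"
        by (rule mult_right_mono[OF c]) (simp add: g_def)
      also have "\<dots> = 3^(d-1) * \<bar>real_of_int t\<bar> powr (-(s - real d + 1))"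
        unfolding g_def using tpos by (simp add: mult.assoc powr_add[symmetric]) (simp add: algebra_simps)
      finally show "real (card {l\<in>Gi. l$i = t}) * g t \<le> 3^(d-1) * \<bar>real_of_int t\<bar> powr (-(s - real d + 1))" .
    qed
    also have "\<dots> = 3^(d-1) * (\<Sum>t\<in>T. \<bar>real_of_int t\<bar> powr (-(s - real d + 1)))"
      by (simp add: sum_distrib_left)
    also have "\<dots> \<le> 3^(d-1) * (2 * (1 + 1/((s - real d + 1) - 1)))"
      using s d_def by (intro mult_left_mono zeta_int finT T0) auto
    finally show "(\<Sum>l\<in>G. if cond i l then g (l$i) else 0) \<le> 3^(d-1) * (2 * (1 + 1/(s - real d)))"
      by simp
  qed
  also have "\<dots> = real (2 * CARD('n) * 3^(CARD('n)-1)) * (1 + 1/(s - real CARD('n)))"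
    by (simp add: d_def)
  finally show ?thesis .
qed

lemma young1:
  fixes f g h :: "'a::ab_group_add \<Rightarrow> real"
  assumes nn: "\<And>x. f x \<ge> 0" "\<And>x. g x \<ge> 0" "\<And>x. h x \<ge> 0"
    and Ff: "\<And>S. finite S \<Longrightarrow> (\<Sum>x\<in>S. (f x)^2) \<le> Ff"
    and Hh: "\<And>S. finite S \<Longrightarrow> (\<Sum>x\<in>S. (h x)^2) \<le> Hh"
    and Gg: "\<And>S. finite S \<Longrightarrow> sum g S \<le> Gg"
    and F: "finite F"
  shows "(\<Sum>p\<in>F. f (fst p) * g (snd p) * h (fst p - snd p)) \<le> sqrt Ff * sqrt Hh * Gg"
proof -
  define J where "J = snd ` F"
  have finJ: "finite J" using F unfolding J_def by auto
  have Ff0: "0 \<le> Ff" using Ff[of "{}"] by simp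
  have Hh0: "0 \<le> Hh" using Hh[of "{}"] by simp
  have "(\<Sum>p\<in>F. f (fst p) * g (snd p) * h (fst p - snd p))
      = (\<Sum>j\<in>J. \<Sum>p\<in>{p\<in>F. snd p = j}. f (fst p) * g (snd p) * h (fst p - snd p))"
    by (rule sum.group[OF F finJ, symmetric]) (auto simp: J_def)
  also have "\<dots> \<le> (\<Sum>j\<in>J. g j * (sqrt Ff * sqrt Hh))"
  proof (rule sum_mono)
    fix j assume "j \<in> J"
    define K where "K = fst ` {p\<in>F. snd p = j}"
    have finK: "finite K" using F unfolding K_def by auto
    have inj: "inj_on fst {p\<in>F. snd p = j}" by (auto simp: inj_on_def prod_eq_iff)
    have "(\<Sum>p\<in>{p\<in>F. snd p = j}. f (fst p) * g (snd p) * h (fst p - snd p))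
        = (\<Sum>p\<in>{p\<in>F. snd p = j}. g j * (f (fst p) * h (fst p - j)))"
      by (intro sum.cong) auto
    also have "\<dots> = g j * (\<Sum>k\<in>K. f k * h (k - j))"
      unfolding K_def by (simp add: sum.reindex[OF inj] sum_distrib_left)
    also have "\<dots> \<le> g j * (sqrt Ff * sqrt Hh)"
    proof (rule mult_left_mono[OF _ nn(2)])
      have "(\<Sum>k\<in>K. f k * h (k - j)) = (\<Sum>k\<in>K. \<bar>f k\<bar> * \<bar>h (k - j)\<bar>)"
        using nn by simp
      also have "\<dots> \<le> L2_set f K * L2_set (\<lambda>k. h (k - j)) K" by (rule L2_set_mult_ineq)
      also have "\<dots> \<le> sqrt Ff * sqrt Hh"
      proof (rule mult_mono)
        show "L2_set f K \<le> sqrt Ff" unfolding L2_set_def using Ff[OF finK] by simp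
        have "(\<Sum>k\<in>K. (h (k - j))^2) = (\<Sum>m\<in>(\<lambda>k. k - j) ` K. (h m)^2)"
          by (subst sum.reindex) (auto simp: inj_on_def)
        also have "\<dots> \<le> Hh" using finK by (intro Hh) auto
        finally show "L2_set (\<lambda>k. h (k - j)) K \<le> sqrt Hh" unfolding L2_set_def by simp
      qed (use Ff0 in \<open>auto simp: L2_set_def intro!: sum_nonneg\<close>)
      finally show "(\<Sum>k\<in>K. f k * h (k - j)) \<le> sqrt Ff * sqrt Hh" .
    qed
    finally show "(\<Sum>p\<in>{p\<in>F. snd p = j}. f (fst p) * g (snd p) * h (fst p - snd p)) \<le> g j * (sqrt Ff * sqrt Hh)" .
  qed
  also have "\<dots> = sum g J * (sqrt Ff * sqrt Hh)" by (simp add: sum_distrib_right)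
  also have "\<dots> \<le> Gg * (sqrt Ff * sqrt Hh)"
    using Ff0 Hh0 by (intro mult_right_mono Gg finJ) auto
  finally show ?thesis by (simp add: mult_ac)
qed

lemma young2:
  fixes f g h :: "'a::ab_group_add \<Rightarrow> real"
  assumes nn: "\<And>x. f x \<ge> 0" "\<And>x. g x \<ge> 0" "\<And>x. h x \<ge> 0"
    and Ff: "\<And>S. finite S \<Longrightarrow> (\<Sum>x\<in>S. (f x)^2) \<le> Ff"
    and Hh: "\<And>S. finite S \<Longrightarrow> (\<Sum>x\<in>S. (h x)^2) \<le> Hh"
    and Gg: "\<And>S. finite S \<Longrightarrow> sum g S \<le> Gg"
    and F: "finite F"
  shows "(\<Sum>p\<in>F. f (fst p) * h (snd p) * g (fst p - snd p)) \<le> sqrt Ff * sqrt Hh * Gg"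
proof -
  define \<sigma> where "\<sigma> = (\<lambda>p::'a\<times>'a. (fst p, fst p - snd p))"
  have inj: "inj_on \<sigma> F" unfolding \<sigma>_def by (auto simp: inj_on_def prod_eq_iff)
  have "(\<Sum>p\<in>F. f (fst p) * h (snd p) * g (fst p - snd p))
      = (\<Sum>q\<in>\<sigma> ` F. f (fst q) * g (snd q) * h (fst q - snd q))"
    by (subst sum.reindex[OF inj]) (auto simp: \<sigma>_def mult_ac intro!: sum.cong)
  also have "\<dots> \<le> sqrt Ff * sqrt Hh * Gg"
    by (rule young1[OF nn Ff Hh Gg]) (use F in auto)
  finally show ?thesis .
qed

definition Sb :: "nat \<Rightarrow> real \<Rightarrow> real" where
  "Sb d s = real (2 * d * 3^(d-1)) * (1 + 1/(s - real d))"

lemma l1_from_l2: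
  fixes A B :: "int^'n::finite \<Rightarrow> real"
  assumes A: "\<And>k. k \<noteq> 0 \<Longrightarrow> A k = B k * wnorm k powr (-(s/2))" "A 0 = 0"
    and Bnn: "\<And>k. B k \<ge> 0"
    and Bb: "\<And>S. finite S \<Longrightarrow> (\<Sum>x\<in>S. (B x)^2) \<le> Bb"
    and s: "s > real CARD('n)"
    and S: "finite S"
  shows "sum A S \<le> sqrt Bb * sqrt (Sb CARD('n) s)"
proof -
  define S' where "S' = S - {0}"
  have finS': "finite S'" using S unfolding S'_def by auto
  have "sum A S = sum A S'" unfolding S'_def using A(2) S
    by (intro sum.mono_neutral_right) auto
  also have "\<dots> = (\<Sum>k\<in>S'. \<bar>B k\<bar> * \<bar>wnorm k powr (-(s/2))\<bar>)"
    using A(1) Bnn by (intro sum.cong) (auto simp: S'_def)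
  also have "\<dots> \<le> L2_set B S' * L2_set (\<lambda>k. wnorm k powr (-(s/2))) S'"
    by (rule L2_set_mult_ineq)
  also have "\<dots> \<le> sqrt Bb * sqrt (Sb CARD('n) s)"
  proof (rule mult_mono)
    show "L2_set B S' \<le> sqrt Bb" unfolding L2_set_def using Bb[OF finS'] by simp
    have "(\<Sum>k\<in>S'. (wnorm k powr (-(s/2)))^2) = (\<Sum>k\<in>S'. wnorm k powr (-s))"
      by (intro sum.cong refl) (simp add: power2_eq_square powr_add[symmetric])
    also have "\<dots> \<le> Sb CARD('n) s" unfolding Sb_def
      using lattice_sum[OF s finS'] by (simp add: S'_def)
    finally show "L2_set (\<lambda>k. wnorm k powr (-(s/2))) S' \<le> sqrt (Sb CARD('n) s)"
      unfolding L2_set_def by simp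
    show "0 \<le> sqrt Bb" using Bb[of "{}"] by simp
  qed (auto simp: L2_set_def intro!: sum_nonneg)
  finally show ?thesis .
qed

lemma pointwise_alg:
  fixes a b c Uj Ul Uk \<beta> r :: real
  assumes abc: "1 \<le> a" "1 \<le> b" "1 \<le> c" "c \<le> a + b" "b \<le> c + a"
    and \<beta>: "\<beta> > 0" and r: "r > 0" and U: "Uj \<ge> 0" "Ul \<ge> 0" "Uk \<ge> 0"
  shows "b * Uj * Ul * (c powr (2*r) * exp (2*\<beta>*c) * Uk)
    \<le> 2 powr r * ( (c powr r * (exp (\<beta>*c) * Uk)) * (a powr r * (exp (\<beta>*a) * Uj)) * (b * (exp (\<beta>*b) * Ul))
       + (c powr (1/2) * (c powr r * (exp (\<beta>*c) * Uk))) * (exp (\<beta>*a) * Uj) * (b powr (1/2) * (b powr r * (exp (\<beta>*b) * Ul)))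
       + (c powr r * (exp (\<beta>*c) * Uk)) * (a powr (1/2) * (exp (\<beta>*a) * Uj)) * (b powr (1/2) * (b powr r * (exp (\<beta>*b) * Ul))))"
proof -
  define ea where "ea = exp (\<beta>*a) * Uj"
  define eb where "eb = exp (\<beta>*b) * Ul"
  define ec where "ec = exp (\<beta>*c) * Uk"
  have e0: "ea \<ge> 0" "eb \<ge> 0" "ec \<ge> 0" using U by (auto simp: ea_def eb_def ec_def)
  have "exp (2*\<beta>*c) = exp (\<beta>*c) * exp (\<beta>*c)" by (simp add: exp_add[symmetric])
  also have "\<dots> \<le> exp (\<beta>*c) * (exp (\<beta>*a) * exp (\<beta>*b))"
    using abc \<beta> by (simp add: exp_add[symmetric] distrib_left[symmetric])
  finally have ex: "exp (2*\<beta>*c) \<le> exp (\<beta>*c) * (exp (\<beta>*a) * exp (\<beta>*b))" .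
  have cp: "c powr (2*r) = c powr r * c powr r" by (simp add: powr_add[symmetric])
  have "b * Uj * Ul * (c powr (2*r) * exp (2*\<beta>*c) * Uk)
      = (b * c powr r * c powr r * (Uj * Ul * Uk)) * exp (2*\<beta>*c)" unfolding cp by (simp add: mult_ac)
  also have "\<dots> \<le> (b * c powr r * c powr r * (Uj * Ul * Uk)) * (exp (\<beta>*c) * (exp (\<beta>*a) * exp (\<beta>*b)))"
    using abc U by (intro mult_left_mono ex) auto
  also have "\<dots> = c powr r * b * (ea * eb * (c powr r * ec))"
    by (simp add: ea_def eb_def ec_def mult_ac)
  finally have s1: "b * Uj * Ul * (c powr (2*r) * exp (2*\<beta>*c) * Uk) \<le> c powr r * b * (ea * eb * (c powr r * ec))" .
  have "c powr r \<le> (a + b) powr r" using abc r by (intro powr_mono2) auto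
  also have "\<dots> \<le> (2 * max a b) powr r" using abc r by (intro powr_mono2) auto
  also have "\<dots> = 2 powr r * max a b powr r" by (simp add: powr_mult)
  also have "\<dots> \<le> 2 powr r * (a powr r + b powr r)"
    by (intro mult_left_mono) (auto simp: max_def)
  finally have s2: "c powr r \<le> 2 powr r * (a powr r + b powr r)" .
  have hb: "b powr (1/2) \<le> c powr (1/2) + a powr (1/2)"
  proof -
    have "b powr (1/2) \<le> (c + a) powr (1/2)" using abc by (intro powr_mono2) auto
    also have "\<dots> = sqrt (c + a)" using abc by (simp add: powr_half_sqrt)
    also have "\<dots> \<le> sqrt c + sqrt a" using abc by (intro sqrt_add_le_add_sqrt) auto
    finally show ?thesis using abc by (simp add: powr_half_sqrt)
  qed
  have bb: "b = b powr (1/2) * b powr (1/2)" using abc by (simp add: powr_add[symmetric])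
  have "b powr r * b = b powr r * b powr (1/2) * b powr (1/2)" using bb by (simp add: mult.assoc)
  also have "\<dots> \<le> b powr r * b powr (1/2) * (c powr (1/2) + a powr (1/2))"
    by (intro mult_left_mono hb) auto
  finally have s3: "b powr r * b \<le> b powr r * b powr (1/2) * (c powr (1/2) + a powr (1/2))" .
  have P0: "0 \<le> ea * eb * (c powr r * ec)" using e0 by auto
  have "c powr r * b * (ea * eb * (c powr r * ec)) \<le> 2 powr r * (a powr r + b powr r) * b * (ea * eb * (c powr r * ec))"
    using s2 abc P0 by (intro mult_right_mono) auto
  also have "\<dots> = 2 powr r * (a powr r * b + b powr r * b) * (ea * eb * (c powr r * ec))"
    by (simp add: algebra_simps)
  also have "\<dots> \<le> 2 powr r * (a powr r * b + b powr r * b powr (1/2) * (c powr (1/2) + a powr (1/2))) * (ea * eb * (c powr r * ec))"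
    using s3 P0 by (intro mult_right_mono mult_left_mono) auto
  also have "\<dots> = 2 powr r * ( (c powr r * ec) * (a powr r * ea) * (b * eb)
       + (c powr (1/2) * (c powr r * ec)) * ea * (b powr (1/2) * (b powr r * eb))
       + (c powr r * ec) * (a powr (1/2) * ea) * (b powr (1/2) * (b powr r * eb)))"
    by (simp add: algebra_simps)
  finally show ?thesis using s1 unfolding ea_def eb_def ec_def by linarith
qed

lemma main_bound:
  fixes u :: "int^'n::finite \<Rightarrow> complex^'n" and r \<beta> :: real
  assumes r: "r > (real CARD('n) + 1)/2" and \<beta>: "\<beta> > 0" and u0: "u 0 = 0"
    and gf: "gfinite r \<beta> (Apow (1/4) u)"
  defines "X \<equiv> \<lambda>k. wnorm k powr r * (exp (\<beta> * wnorm k) * norm (u k))"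
  defines "Y \<equiv> \<lambda>k. wnorm k powr (1/2) * X k"
  shows "(\<lambda>k. cdot (Bop u u k) (Apow r (expA (2*\<beta>) u) k)) summable_on UNIV \<and>
     cmod (\<Sum>\<^sub>\<infinity>k. cdot (Bop u u k) (Apow r (expA (2*\<beta>) u) k))
       \<le> 6 * 2 powr r * sqrt (\<Sum>\<^sub>\<infinity>k. (X k)^2) * (\<Sum>\<^sub>\<infinity>k. (Y k)^2) * sqrt (Sb CARD('n) (2*r-1))"
proof -
  define d where "d = CARD('n)"
  have d1: "real d \<ge> 1" unfolding d_def by (simp add: Suc_leI)
  have r0: "r > 0" using r d1 d_def by simp
  define v where "v = (\<lambda>k. exp (\<beta> * wnorm k) * norm (u k))"
  have Xv: "X = (\<lambda>k. wnorm k powr r * v k)" unfolding X_def v_def ..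
  have v0: "\<And>k. v k \<ge> 0" unfolding v_def by simp
  have X0: "\<And>k. X k \<ge> 0" unfolding X_def by simp
  have Y0: "\<And>k. Y k \<ge> 0" unfolding Y_def using X0 by simp
  have normY: "norm (Apow (r/2) (expA \<beta> (Apow (1/4) u)) k) = Y k" for k
    unfolding Apow_def expA_def Y_def X_def by (simp add: norm_smult_c norm_mult mult_ac)
  have normX: "norm (Apow (r/2) (expA \<beta> u) k) = X k" for k
    unfolding Apow_def expA_def X_def by (simp add: norm_smult_c norm_mult mult_ac)
  have Ysum: "(\<lambda>k. (Y k)^2) summable_on UNIV"
    using gf unfolding gfinite_def normY .
  have XY: "X k \<le> Y k" for k
  proof (cases "k = 0")
    case True thus ?thesis by (simp add: X_def Y_def u0)
  next
    case False
    hence "1 \<le> wnorm k powr (1/2)" using wnorm_ge1 by (intro ge_one_powr_ge_zero) auto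
    thus ?thesis unfolding Y_def using X0[of k] by (simp add: mult_le_cancel_right1)
  qed
  have X2Y2: "(X k)^2 \<le> (Y k)^2" for k using XY X0 by (intro power_mono) auto
  have Xsum: "(\<lambda>k. (X k)^2) summable_on UNIV"
    by (rule summable_on_comparison_test[OF Ysum]) (auto intro: X2Y2)
  define P2 where "P2 = (\<Sum>\<^sub>\<infinity>k. (X k)^2)"
  define Q2 where "Q2 = (\<Sum>\<^sub>\<infinity>k. (Y k)^2)"
  have PQ: "P2 \<le> Q2" unfolding P2_def Q2_def by (rule infsum_mono[OF Xsum Ysum X2Y2])
  have P0: "P2 \<ge> 0" unfolding P2_def by (rule infsum_nonneg) simp
  have finX: "\<And>S. finite S \<Longrightarrow> (\<Sum>k\<in>S. (X k)^2) \<le> P2"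
    unfolding P2_def by (rule finite_sum_le_infsum[OF Xsum]) auto
  have finY: "\<And>S. finite S \<Longrightarrow> (\<Sum>k\<in>S. (Y k)^2) \<le> Q2"
    unfolding Q2_def by (rule finite_sum_le_infsum[OF Ysum]) auto
  define S1 where "S1 = Sb d (2*r-1)"
  define S2 where "S2 = Sb d (2*r)"
  have s1: "2*r - 1 > real d" using r unfolding d_def by simp
  have s2: "2*r > real d" using s1 by simp
  have S12: "S2 \<le> S1" unfolding S1_def S2_def Sb_def using s1
    by (intro mult_left_mono add_left_mono divide_left_mono) auto
  have S20: "S2 \<ge> 0" unfolding S2_def Sb_def using s2 by simp
  define H where "H = (\<lambda>k. wnorm k * v k)"
  define W where "W = (\<lambda>k. wnorm k powr (1/2) * v k)"
  have H0: "H k \<ge> 0" for k unfolding H_def by (rule mult_nonneg_nonneg[OF wnorm_nonneg v0])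
  have W0: "\<And>k. W k \<ge> 0" unfolding W_def using v0 by simp
  have Hb: "\<And>S. finite S \<Longrightarrow> sum H S \<le> sqrt Q2 * sqrt S1"
    unfolding S1_def d_def
  proof (rule l1_from_l2[OF _ _ Y0 finY s1[unfolded d_def]])
    fix k :: "int^'n" assume k: "k \<noteq> 0"
    have wp: "wnorm k > 0" using wnorm_ge1[OF k] by simp
    have e: "1/2 + r - (2*r-1)/2 = (1::real)" by (simp add: field_simps)
    have "wnorm k powr (1/2) * wnorm k powr r * wnorm k powr (- ((2*r-1)/2)) = wnorm k"
      using wp by (simp add: powr_add[symmetric] e)
    thus "H k = Y k * wnorm k powr (- ((2*r-1)/2))"
      unfolding H_def Y_def Xv by (simp add: mult_ac)
  qed (simp add: H_def)
  have Vb: "\<And>S. finite S \<Longrightarrow> sum v S \<le> sqrt P2 * sqrt S2"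
    unfolding S2_def d_def
  proof (rule l1_from_l2[OF _ _ X0 finX s2[unfolded d_def]])
    fix k :: "int^'n" assume k: "k \<noteq> 0"
    have wp: "wnorm k > 0" using wnorm_ge1[OF k] by simp
    have "wnorm k powr r * wnorm k powr (- (2*r/2)) = 1"
      using wp by (simp add: powr_add[symmetric])
    thus "v k = X k * wnorm k powr (- (2*r/2))"
      unfolding Xv by (metis mult.commute mult.left_commute mult.right_neutral)
  qed (simp add: v_def u0)
  have Wb: "\<And>S. finite S \<Longrightarrow> sum W S \<le> sqrt Q2 * sqrt S2"
    unfolding S2_def d_def
  proof (rule l1_from_l2[OF _ _ Y0 finY s2[unfolded d_def]])
    fix k :: "int^'n" assume k: "k \<noteq> 0"
    have wp: "wnorm k > 0" using wnorm_ge1[OF k] by simp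
    have "wnorm k powr r * wnorm k powr (- (2*r/2)) = 1"
      using wp by (simp add: powr_add[symmetric])
    thus "W k = Y k * wnorm k powr (- (2*r/2))"
      unfolding W_def Y_def Xv by (metis mult.commute mult.left_commute mult.right_neutral)
  qed (simp add: W_def v_def u0)
  define Fc where "Fc = (\<lambda>k j. wnorm (k-j) * norm (u j) * norm (u (k-j))
      * (wnorm k powr (2*r) * exp (2*\<beta>*wnorm k) * norm (u k)))"
  have Fc0: "Fc k j \<ge> 0" for k j unfolding Fc_def
    by (intro mult_nonneg_nonneg wnorm_nonneg norm_ge_zero) simp_all
  have pw: "Fc k j \<le> 2 powr r * (X k * X j * H (k-j) + Y k * v j * Y (k-j) + X k * W j * Y (k-j))" for k j
  proof (cases "j = 0 \<or> k - j = 0 \<or> k = 0")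
    case True
    hence "Fc k j = 0" unfolding Fc_def using u0 by auto
    thus ?thesis using X0 Y0 H0 v0 W0 by (simp add: add_nonneg_nonneg)
  next
    case False
    hence nz: "j \<noteq> 0" "k - j \<noteq> 0" "k \<noteq> 0" by auto
    have c1: "wnorm k \<le> wnorm j + wnorm (k-j)" using wnorm_triangle[of j "k-j"] by simp
    have c2: "wnorm (k-j) \<le> wnorm k + wnorm j"
      using wnorm_triangle[of k "-j"] by (simp add: wnorm_minus)
    show ?thesis unfolding Fc_def Y_def Xv H_def W_def v_def
      by (rule pointwise_alg[OF wnorm_ge1[OF nz(1)] wnorm_ge1[OF nz(2)] wnorm_ge1[OF nz(3)] c1 c2 \<beta> r0])
        auto
  qed
  define Bnd where "Bnd = 3 * 2 powr r * sqrt P2 * Q2 * sqrt S1"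
  have finF: "(\<Sum>p\<in>F. Fc (fst p) (snd p)) \<le> Bnd" if F: "finite F" for F
  proof -
    have T1: "(\<Sum>p\<in>F. X (fst p) * X (snd p) * H (fst p - snd p)) \<le> sqrt P2 * sqrt P2 * (sqrt Q2 * sqrt S1)"
      by (rule young2[OF X0 H0 X0 finX finX Hb F])
    have T2: "(\<Sum>p\<in>F. Y (fst p) * v (snd p) * Y (fst p - snd p)) \<le> sqrt Q2 * sqrt Q2 * (sqrt P2 * sqrt S2)"
      by (rule young1[OF Y0 v0 Y0 finY finY Vb F])
    have T3: "(\<Sum>p\<in>F. X (fst p) * W (snd p) * Y (fst p - snd p)) \<le> sqrt P2 * sqrt Q2 * (sqrt Q2 * sqrt S2)"
      by (rule young1[OF X0 W0 Y0 finX finY Wb F])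
    define p where "p = sqrt P2"
    define q where "q = sqrt Q2"
    define t1 where "t1 = sqrt S1"
    define t2 where "t2 = sqrt S2"
    have pq: "0 \<le> p" "p \<le> q" "0 \<le> t2" "t2 \<le> t1"
      using P0 PQ S12 S20 by (auto simp: p_def q_def t1_def t2_def)
    have qq: "Q2 = q * q" unfolding q_def using P0 PQ by simp
    have n1: "p * p * (q * t1) \<le> p * q * q * t1"
      using pq by (simp add: mult_left_mono mult_right_mono mult.assoc)
    have n2: "q * q * (p * t2) \<le> p * q * q * t1"
      using pq by (simp add: mult_left_mono mult_right_mono mult_ac)
    have n3: "p * q * (q * t2) \<le> p * q * q * t1"
      using pq by (simp add: mult_left_mono mult_right_mono mult_ac)
    have "(\<Sum>p\<in>F. Fc (fst p) (snd p)) \<le> (\<Sum>p\<in>F. 2 powr r * (X (fst p) * X (snd p) * H (fst p - snd p)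
        + Y (fst p) * v (snd p) * Y (fst p - snd p) + X (fst p) * W (snd p) * Y (fst p - snd p)))"
      by (intro sum_mono pw)
    also have "\<dots> = 2 powr r * ((\<Sum>p\<in>F. X (fst p) * X (snd p) * H (fst p - snd p))
        + (\<Sum>p\<in>F. Y (fst p) * v (snd p) * Y (fst p - snd p)) + (\<Sum>p\<in>F. X (fst p) * W (snd p) * Y (fst p - snd p)))"
      by (simp only: sum_distrib_left[symmetric] sum.distrib)
    also have "\<dots> \<le> 2 powr r * (p * p * (q * t1) + q * q * (p * t2) + p * q * (q * t2))"
      using T1 T2 T3 unfolding p_def q_def t1_def t2_def by (intro mult_left_mono add_mono) auto
    also have "\<dots> \<le> 2 powr r * (3 * (p * q * q * t1))"
      using n1 n2 n3 by (intro mult_left_mono) auto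
    also have "\<dots> = Bnd" unfolding Bnd_def qq p_def t1_def by (simp add: mult_ac)
    finally show ?thesis .
  qed
  have Fsum: "(\<lambda>(k,j). Fc k j) summable_on UNIV"
  proof (rule nonneg_bdd_above_summable_on)
    show "bdd_above (sum (\<lambda>(k,j). Fc k j) ` {F. F \<subseteq> UNIV \<and> finite F})"
      by (rule bdd_aboveI2[where M=Bnd]) (use finF in \<open>auto simp: case_prod_beta\<close>)
  qed (auto simp: Fc0)
  have Fle: "(\<Sum>\<^sub>\<infinity>(k,j). Fc k j) \<le> Bnd"
    by (rule infsum_le_finite_sums[OF Fsum]) (use finF in \<open>auto simp: case_prod_beta\<close>)
  have FsumS: "(\<lambda>(k,j). Fc k j) summable_on Sigma UNIV (\<lambda>_. UNIV)" using Fsum by simp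
  define G where "G = (\<lambda>k. \<Sum>\<^sub>\<infinity>j. Fc k j)"
  have Gsum: "G summable_on UNIV"
    unfolding G_def using summable_on_Sigma_banach[OF FsumS] by simp
  have Geq: "(\<Sum>\<^sub>\<infinity>k. G k) = (\<Sum>\<^sub>\<infinity>(k,j). Fc k j)"
    unfolding G_def using infsum_Sigma'_banach[OF FsumS] by simp
  have Fk: "Fc k summable_on UNIV" for k
    using summable_on_SigmaD1[OF FsumS, of k] by simp
  have G0: "G k \<ge> 0" for k unfolding G_def by (rule infsum_nonneg) (simp add: Fc0)
  define c where "c = (\<lambda>k. cdot (Bop u u k) (Apow r (expA (2*\<beta>) u) k))"
  have ck: "norm (c k) \<le> 2 * G k" for k
  proof -
    define nw where "nw = wnorm k powr (2*r) * exp (2*\<beta>*wnorm k) * norm (u k)"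
    have nw0: "nw \<ge> 0" unfolding nw_def by simp
    have normw: "norm (Apow r (expA (2*\<beta>) u) k) = nw"
      unfolding Apow_def expA_def nw_def by (simp add: norm_smult_c norm_mult mult_ac)
    have "norm (c k) \<le> norm (Bop u u k) * nw"
      unfolding c_def using cdot_bound normw by metis
    also have "\<dots> \<le> 2 * norm (advect u u k) * nw"
      unfolding Bop_def by (intro mult_right_mono leray_bound nw0)
    also have "\<dots> \<le> 2 * G k"
    proof (cases "nw = 0")
      case True thus ?thesis using G0[of k] by simp
    next
      case False
      hence nwp: "nw > 0" using nw0 by simp
      define T where "T = (\<lambda>j. wnorm (k-j) * norm (u j) * norm (u (k-j)))"
      have FT: "Fc k j = T j * nw" for j unfolding Fc_def T_def nw_def by simp
      have Tsum: "T summable_on UNIV"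
      proof -
        have "(\<lambda>j. Fc k j * (1/nw)) summable_on UNIV" by (rule summable_on_cmult_left[OF Fk])
        thus ?thesis using nwp by (simp add: FT)
      qed
      define tm where "tm = (\<lambda>j. (\<i> * kdot (k - j) (u j)) *s u (k - j))"
      have tmb: "norm (tm j) \<le> T j" for j
      proof -
        have "norm (tm j) = cmod (kdot (k-j) (u j)) * norm (u (k-j))"
          unfolding tm_def by (simp add: norm_smult_c norm_mult)
        also have "\<dots> \<le> wnorm (k-j) * norm (u j) * norm (u (k-j))"
          by (intro mult_right_mono kdot_bound) auto
        finally show ?thesis unfolding T_def .
      qed
      have tmsum: "(\<lambda>j. norm (tm j)) summable_on UNIV"
        by (rule summable_on_comparison_test[OF Tsum]) (auto simp: tmb)
      have "norm (advect u u k) = norm (\<Sum>\<^sub>\<infinity>j. tm j)"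
        unfolding advect_def tm_def ..
      also have "\<dots> \<le> (\<Sum>\<^sub>\<infinity>j. norm (tm j))" by (rule norm_infsum_bound[OF tmsum])
      also have "\<dots> \<le> (\<Sum>\<^sub>\<infinity>j. T j)" by (rule infsum_mono[OF tmsum Tsum tmb])
      finally have "2 * norm (advect u u k) * nw \<le> 2 * (\<Sum>\<^sub>\<infinity>j. T j) * nw"
        using nwp by simp
      also have "\<dots> = 2 * (\<Sum>\<^sub>\<infinity>j. T j * nw)" by (simp add: infsum_cmult_left')
      also have "\<dots> = 2 * G k" unfolding G_def by (simp add: FT[symmetric])
      finally show ?thesis .
    qed
    finally show ?thesis .
  qed
  have G2sum: "(\<lambda>k. 2 * G k) summable_on UNIV" by (rule summable_on_cmult_right[OF Gsum])
  have cabs: "(\<lambda>k. norm (c k)) summable_on UNIV"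
    by (rule summable_on_comparison_test[OF G2sum]) (auto simp: ck)
  have csum: "c summable_on UNIV" by (rule abs_summable_summable[OF cabs])
  have "norm (\<Sum>\<^sub>\<infinity>k. c k) \<le> (\<Sum>\<^sub>\<infinity>k. norm (c k))" by (rule norm_infsum_bound[OF cabs])
  also have "\<dots> \<le> (\<Sum>\<^sub>\<infinity>k. 2 * G k)" by (rule infsum_mono[OF cabs G2sum ck])
  also have "\<dots> = 2 * (\<Sum>\<^sub>\<infinity>k. G k)" by (simp add: infsum_cmult_right')
  also have "\<dots> \<le> 2 * Bnd" using Geq Fle by simp
  finally have "norm (\<Sum>\<^sub>\<infinity>k. c k) \<le> 2 * Bnd" .
  thus ?thesis using csum unfolding c_def Bnd_def P2_def Q2_def S1_def d_def by simp
qed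

lemma key_const:
  fixes r :: real and d :: nat
  assumes r: "r > (real d + 1)/2"
  shows "6 * sqrt (Sb d (2*r-1)) \<le> (6 * sqrt (real (2 * d * 3^(d-1))) * pi * 2^(d-1)) * CW d r"
proof -
  define x where "x = 2*r - 1 - real d"
  have x: "x > 0" using r unfolding x_def by simp
  define K where "K = real (2 * d * 3^(d-1))"
  have K0: "K \<ge> 0" unfolding K_def by simp
  have S1: "Sb d (2*r-1) = K * (1 + 1/x)" unfolding Sb_def K_def x_def by simp
  have CW: "CW d r = (1 + 1/x) / (pi * 2^(d-1))"
  proof -
    have "(2*r - real d) / (2*r - 1 - real d) = 1 + 1/x" using x unfolding x_def by (simp add: field_simps)
    thus ?thesis unfolding CW_def x_def by simp
  qed
  have y1: "1 + 1/x \<ge> 1" using x by simp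
  have sy: "sqrt y \<le> y" if y1: "1 \<le> y" for y :: real
  proof -
    have "1 * y \<le> y * y" by (rule mult_right_mono[OF y1]) (use y1 in simp)
    hence "sqrt y \<le> sqrt (y * y)" by (intro real_sqrt_le_mono) simp
    thus ?thesis using y1 by (simp add: real_sqrt_mult_self)
  qed
  have "sqrt (1 + 1/x) \<le> 1 + 1/x" by (rule sy[OF y1])
  hence "sqrt (Sb d (2*r-1)) \<le> sqrt K * (1 + 1/x)"
    unfolding S1 real_sqrt_mult using K0 by (intro mult_left_mono) auto
  also have "\<dots> = (sqrt K * pi * 2^(d-1)) * CW d r" unfolding CW by simp
  finally show ?thesis unfolding K_def by simp
qed

theorem proposition3p2:
  assumes "CARD('n::finite) \<in> {2, 3}"
  shows "\<exists>C>0. \<forall>r \<beta> (u :: int^'n \<Rightarrow> complex^'n).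
     r > (real CARD('n) + 1) / 2 \<longrightarrow> \<beta> > 0 \<longrightarrow> in_HC u \<longrightarrow>
     gfinite r \<beta> (Apow (1/4) u) \<longrightarrow>
       (\<lambda>k. cdot (Bop u u k) (Apow r (expA (2*\<beta>) u) k)) summable_on UNIV \<and>
       cmod (L2inner (Bop u u) (Apow r (expA (2*\<beta>) u)))
         \<le> C * 2 powr r * CW CARD('n) r * gnorm r \<beta> u * (gnorm r \<beta> (Apow (1/4) u))^2"
proof -
  define d where "d = CARD('n)"
  define C where "C = 6 * sqrt (real (2 * d * 3^(d-1))) * pi * 2^(d-1)"
  have d1: "d \<ge> 1" unfolding d_def by (simp add: Suc_leI)
  have Cpos: "C > 0" unfolding C_def using d1 by simp
  show ?thesis
  proof (intro exI[of _ C] conjI Cpos allI impI)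
    fix r \<beta> :: real and u :: "int^'n \<Rightarrow> complex^'n"
    assume r: "r > (real CARD('n) + 1) / 2" and \<beta>: "\<beta> > 0" and hc: "in_HC u"
      and gf: "gfinite r \<beta> (Apow (1/4) u)"
    have u0: "u 0 = 0" using hc unfolding in_HC_def by simp
    define X where "X = (\<lambda>k. wnorm k powr r * (exp (\<beta> * wnorm k) * norm (u k)))"
    define Y where "Y = (\<lambda>k. wnorm k powr (1/2) * X k)"
    note M = main_bound[OF r \<beta> u0 gf]
    have normY: "norm (Apow (r/2) (expA \<beta> (Apow (1/4) u)) k) = Y k" for k
      unfolding Apow_def expA_def Y_def X_def by (simp add: norm_smult_c norm_mult mult_ac)
    have normX: "norm (Apow (r/2) (expA \<beta> u) k) = X k" for k
      unfolding Apow_def expA_def X_def by (simp add: norm_smult_c norm_mult mult_ac)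
    define P2 where "P2 = (\<Sum>\<^sub>\<infinity>k. (X k)^2)"
    define Q2 where "Q2 = (\<Sum>\<^sub>\<infinity>k. (Y k)^2)"
    define S1 where "S1 = Sb d (2*r-1)"
    define c where "c = (\<lambda>k. cdot (Bop u u k) (Apow r (expA (2*\<beta>) u) k))"
    have Msum: "c summable_on UNIV" using M unfolding c_def by simp
    have Mb: "cmod (\<Sum>\<^sub>\<infinity>k. c k) \<le> 6 * 2 powr r * sqrt P2 * Q2 * sqrt S1"
      using M unfolding c_def P2_def Q2_def S1_def X_def Y_def d_def by simp
    have P0: "P2 \<ge> 0" unfolding P2_def by (rule infsum_nonneg) simp
    have Q0: "Q2 \<ge> 0" unfolding Q2_def by (rule infsum_nonneg) simp
    define A where "A = (2*pi)^d"
    have A1: "A \<ge> 1" unfolding A_def using pi_gt3 by (intro one_le_power) auto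
    have g1: "gnorm r \<beta> u = sqrt A * sqrt P2"
      unfolding gnorm_def L2norm_def normX P2_def A_def d_def by (simp add: real_sqrt_mult)
    have g2: "(gnorm r \<beta> (Apow (1/4) u))^2 = A * Q2"
      unfolding gnorm_def L2norm_def normY Q2_def A_def d_def using A1 Q0
      by (simp add: A_def Q2_def d_def)
    have L: "cmod (L2inner (Bop u u) (Apow r (expA (2*\<beta>) u))) = A * cmod (\<Sum>\<^sub>\<infinity>k. c k)"
      unfolding L2inner_def c_def A_def d_def by (simp add: norm_mult norm_power)
    have kc: "6 * sqrt S1 \<le> C * CW d r"
      unfolding S1_def C_def by (rule key_const) (use r in \<open>simp add: d_def\<close>)
    have sA: "sqrt A \<ge> 1" using A1 by simp
    have nn: "0 \<le> A * 2 powr r * sqrt P2 * Q2" using A1 P0 Q0 by simp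
    have "cmod (L2inner (Bop u u) (Apow r (expA (2*\<beta>) u))) \<le> A * (6 * 2 powr r * sqrt P2 * Q2 * sqrt S1)"
      unfolding L using Mb A1 by (intro mult_left_mono) auto
    also have "\<dots> = (A * 2 powr r * sqrt P2 * Q2) * (6 * sqrt S1)" by (simp add: mult_ac)
    also have "\<dots> \<le> (A * 2 powr r * sqrt P2 * Q2) * (C * CW d r)"
      by (rule mult_left_mono[OF kc nn])
    also have "\<dots> \<le> (A * 2 powr r * sqrt P2 * Q2) * (C * CW d r * sqrt A)"
    proof (rule mult_left_mono[OF _ nn])
      have "0 \<le> CW d r" using r unfolding CW_def d_def
        by (intro mult_nonneg_nonneg divide_nonneg_nonneg) auto
      hence "0 \<le> C * CW d r" using Cpos by simp
      thus "C * CW d r \<le> C * CW d r * sqrt A" using sA by (simp add: mult_le_cancel_left1)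
    qed
    also have "\<dots> = C * 2 powr r * CW CARD('n) r * gnorm r \<beta> u * (gnorm r \<beta> (Apow (1/4) u))^2"
      unfolding g1 g2 d_def by (simp add: mult_ac)
    finally show "cmod (L2inner (Bop u u) (Apow r (expA (2*\<beta>) u)))
         \<le> C * 2 powr r * CW CARD('n) r * gnorm r \<beta> u * (gnorm r \<beta> (Apow (1/4) u))^2" .
    show "(\<lambda>k. cdot (Bop u u k) (Apow r (expA (2*\<beta>) u) k)) summable_on UNIV"
      using Msum unfolding c_def .
  qed
qed

end
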